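(* Let $\alpha_1,\alpha_2,\alpha_3\in(0,\pi)$ with $\alpha_1+\alpha_2+\alpha_3=2\pi$ and $\alpha_2\ge\alpha_1$. Then $$(\sin\alpha_1+\sin\alpha_2+\sin\alpha_3)^2<\Big[\big(\sin\tfrac{\alpha_3}{2}-\sin\tfrac{\alpha_2-\alpha_1}{2}\big)\sin\alpha_2+\big(\sin\tfrac{\alpha_3}{2}+\sin\tfrac{\alpha_2-\alpha_1}{2}\big)\sin\alpha_1\Big]^2+\Big[(\sin\alpha_1+\sin\alpha_2)\big(\cos\tfrac{\alpha_3}{2}+\cos\tfrac{\alpha_2-\alpha_1}{2}\big)\Big]^2.$$ Equivalently, if $\sigma_{12},\sigma_{13},\sigma_{23}>0$ satisfy $\sin\alpha_1/\sigma_{23}=\sin\alpha_2/\sigma_{13}=\sin\alpha_3/\sigma_{12}$, then $$(\sigma_{12}+\sigma_{13}+\sigma_{23})^2<\Big[\big(\sin\tfrac{\alpha_3}{2}-\sin\tfrac{\alpha_2-\alpha_1}{2}\big)\sigma_{13}+\big(\sin\tfrac{\alpha_3}{2}+\sin\tfrac{\alpha_2-\alpha_1}{2}\big)\sigma_{23}\Big]^2+\Big[(\sigma_{13}+\sigma_{23})\big(\cos\tfrac{\alpha_3}{2}+\cos\tfrac{\alpha_2-\alpha_1}{2}\big)\Big]^2.$$ *)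

theory Defs
  imports Complex_Main
begin

end

theory Submission
  imports Defs
begin

lemma key:
  fixes s1 c1 s2 c2 :: real
  assumes "s1^2 + c1^2 = 1" "s2^2 + c2^2 = 1" "s1 > 0" "s2 > 0" "c1 > 0" "c2 > 0"
  shows "(2*s1*c1 + 2*s2*c2 + 2*(s1*c2+c1*s2)*(s1*s2-c1*c2))^2 <
     (((s1*c2+c1*s2) - (s2*c1-c2*s1)) * (2*s2*c2) + ((s1*c2+c1*s2) + (s2*c1-c2*s1)) * (2*s1*c1))^2
   + ((2*s1*c1 + 2*s2*c2) * ((s1*s2-c1*c2) + (c2*c1+s2*s1)))^2"
proof -
  have e1: "2*s1*c1 + 2*s2*c2 + 2*(s1*c2+c1*s2)*(s1*s2-c1*c2) = 4*s1*s2*(s1*c2+c1*s2)"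
    using assms(1,2) by algebra
  have e2: "(s1*c2+c1*s2)^2 + 4*c1^2*c2^2 = (c1^2+c2^2)^2 + (s1*c1+s2*c2)^2"
    using assms(1,2) by algebra
  have p: "0 < 64*(s1*s2)^2*(c1*c2)^2" using assms by simp
  have "(((s1*c2+c1*s2) - (s2*c1-c2*s1)) * (2*s2*c2) + ((s1*c2+c1*s2) + (s2*c1-c2*s1)) * (2*s1*c1))^2
   + ((2*s1*c1 + 2*s2*c2) * ((s1*s2-c1*c2) + (c2*c1+s2*s1)))^2
    = 16*(s1*s2)^2*((c1^2+c2^2)^2 + (s1*c1+s2*c2)^2)"
    by (simp add: algebra_simps power2_eq_square)
  also have "\<dots> = 16*(s1*s2)^2*((s1*c2+c1*s2)^2) + 64*(s1*s2)^2*(c1*c2)^2"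
  proof -
    have "16*(s1*s2)^2*((c1^2+c2^2)^2 + (s1*c1+s2*c2)^2) = 16*(s1*s2)^2*((s1*c2+c1*s2)^2 + 4*c1^2*c2^2)"
      using e2 by simp
    then show ?thesis by (simp add: algebra_simps power2_eq_square)
  qed
  finally have r: "(((s1*c2+c1*s2) - (s2*c1-c2*s1)) * (2*s2*c2) + ((s1*c2+c1*s2) + (s2*c1-c2*s1)) * (2*s1*c1))^2
   + ((2*s1*c1 + 2*s2*c2) * ((s1*s2-c1*c2) + (c2*c1+s2*s1)))^2 = 16*(s1*s2)^2*((s1*c2+c1*s2)^2) + 64*(s1*s2)^2*(c1*c2)^2" .
  have l: "(2*s1*c1 + 2*s2*c2 + 2*(s1*c2+c1*s2)*(s1*s2-c1*c2))^2 = 16*(s1*s2)^2*((s1*c2+c1*s2)^2)"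
    unfolding e1 by (simp add: power2_eq_square algebra_simps)
  show ?thesis unfolding r l using p by simp
qed

theorem mainTheorem7:
  fixes a1 a2 a3 :: real
  assumes "0 < a1" "a1 < pi" "0 < a2" "a2 < pi" "0 < a3" "a3 < pi"
    and "a1 + a2 + a3 = 2 * pi" and "a2 \<ge> a1"
  shows "(sin a1 + sin a2 + sin a3)^2 <
           ((sin (a3/2) - sin ((a2 - a1)/2)) * sin a2 + (sin (a3/2) + sin ((a2 - a1)/2)) * sin a1)^2
         + ((sin a1 + sin a2) * (cos (a3/2) + cos ((a2 - a1)/2)))^2
       \<and> (\<forall>s12 s13 s23 :: real. 0 < s12 \<longrightarrow> 0 < s13 \<longrightarrow> 0 < s23 \<longrightarrow>
           sin a1 / s23 = sin a2 / s13 \<longrightarrow> sin a2 / s13 = sin a3 / s12 \<longrightarrow>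
           (s12 + s13 + s23)^2 <
           ((sin (a3/2) - sin ((a2 - a1)/2)) * s13 + (sin (a3/2) + sin ((a2 - a1)/2)) * s23)^2
         + ((s13 + s23) * (cos (a3/2) + cos ((a2 - a1)/2)))^2)"
proof -
  define x where "x = a1/2"
  define y where "y = a2/2"
  have a1: "a1 = 2*x" and a2: "a2 = 2*y" unfolding x_def y_def by auto
  have z: "a3/2 = pi - (x+y)" using assms(7) unfolding x_def y_def by simp
  have d: "(a2-a1)/2 = y - x" unfolding x_def y_def by simp
  have x0: "0 < x" "x < pi/2" and y0: "0 < y" "y < pi/2" using assms unfolding x_def y_def by auto
  have s1: "sin x > 0" using x0 by (intro sin_gt_zero) auto
  have s2: "sin y > 0" using y0 by (intro sin_gt_zero) auto
  have c1: "cos x > 0" using x0 by (intro cos_gt_zero) auto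
  have c2: "cos y > 0" using y0 by (intro cos_gt_zero) auto
  have sa1: "sin a1 = 2*sin x*cos x" using a1 sin_double by simp
  have sa2: "sin a2 = 2*sin y*cos y" using a2 sin_double by simp
  have sz: "sin (a3/2) = sin x * cos y + cos x * sin y" unfolding z by (simp add: sin_add)
  have cz: "cos (a3/2) = sin x * sin y - cos x * cos y" unfolding z by (simp add: cos_add)
  have sa3: "sin a3 = 2*(sin x * cos y + cos x * sin y)*(sin x * sin y - cos x * cos y)"
  proof -
    have "sin a3 = sin (2*(a3/2))" by simp
    also have "\<dots> = 2*sin (a3/2)*cos (a3/2)" by (rule sin_double)
    finally show ?thesis using sz cz by simp
  qed
  have sd: "sin ((a2-a1)/2) = sin y * cos x - cos y * sin x" unfolding d by (simp add: sin_diff)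
  have cd: "cos ((a2-a1)/2) = cos y * cos x + sin y * sin x" unfolding d by (simp add: cos_diff)
  have K: "(sin a1 + sin a2 + sin a3)^2 <
           ((sin (a3/2) - sin ((a2 - a1)/2)) * sin a2 + (sin (a3/2) + sin ((a2 - a1)/2)) * sin a1)^2
         + ((sin a1 + sin a2) * (cos (a3/2) + cos ((a2 - a1)/2)))^2"
    unfolding sa1 sa2 sa3 sz cz sd cd
    using key[OF sin_cos_squared_add[of x] sin_cos_squared_add[of y] s1 s2 c1 c2]
    by (simp add: algebra_simps)
  have pa1: "sin a1 > 0" "sin a2 > 0" "sin a3 > 0" using assms by (auto intro: sin_gt_zero)
  show ?thesis
  proof (intro conjI allI impI)
    show "(sin a1 + sin a2 + sin a3)^2 <
           ((sin (a3/2) - sin ((a2 - a1)/2)) * sin a2 + (sin (a3/2) + sin ((a2 - a1)/2)) * sin a1)^2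
         + ((sin a1 + sin a2) * (cos (a3/2) + cos ((a2 - a1)/2)))^2" by (rule K)
  next
    fix s12 s13 s23 :: real
    assume h: "0 < s12" "0 < s13" "0 < s23" "sin a1 / s23 = sin a2 / s13" "sin a2 / s13 = sin a3 / s12"
    define k where "k = s13 / sin a2"
    have kp: "k > 0" using h pa1 unfolding k_def by simp
    have e13: "s13 = k * sin a2" using pa1 unfolding k_def by simp
    have e23: "s23 = k * sin a1" using h(2,3,4) pa1 unfolding k_def by (simp add: field_simps)
    have e12: "s12 = k * sin a3" using h(1,2,5) pa1 unfolding k_def by (simp add: field_simps)
    define P where "P = sin (a3/2) - sin ((a2 - a1)/2)"
    define Q where "Q = sin (a3/2) + sin ((a2 - a1)/2)"
    define R where "R = cos (a3/2) + cos ((a2 - a1)/2)"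
    have K': "(sin a1 + sin a2 + sin a3)^2 < (P * sin a2 + Q * sin a1)^2 + ((sin a1 + sin a2) * R)^2"
      using K unfolding P_def Q_def R_def .
    have "k^2 * (sin a1 + sin a2 + sin a3)^2 < k^2 * ((P * sin a2 + Q * sin a1)^2 + ((sin a1 + sin a2) * R)^2)"
      using K' kp by simp
    then have "(s12 + s13 + s23)^2 < (P * s13 + Q * s23)^2 + ((s13 + s23) * R)^2"
      unfolding e12 e13 e23 by (simp add: power2_eq_square algebra_simps)
    then show "(s12 + s13 + s23)^2 <
           ((sin (a3/2) - sin ((a2 - a1)/2)) * s13 + (sin (a3/2) + sin ((a2 - a1)/2)) * s23)^2
         + ((s13 + s23) * (cos (a3/2) + cos ((a2 - a1)/2)))^2" unfolding P_def Q_def R_def .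
  qed
qed

end
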